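(* Let $n\ge1$, $m\ge2$, $\alpha\in(0,1)$, $\bar g_a>0$, and let $W$ be a real $mn\times mn$ matrix satisfying (S), (A1), (A2), (A3) from the context, with largest eigenvalue $\mu_{\max}(W)$. If $\bar g_a>\alpha(\mu_{\max}(W)-2)$, then $(\bar s,\bar a)=(0,0)$ is the unique equilibrium of the system $$\dot{\bar s}=W\bar f(\bar s)-\bar s-\bar a,\qquad \dot{\bar a}=\bar g_a\bar f(\bar s)-\alpha\bar a,\qquad (\bar s,\bar a)\in\mathbb{R}^{mn}\times\mathbb{R}^{mn}.$$
   Context: For $s\in\mathbb{R}^{mn}$ write $s=(s_{11},\dots,s_{1m},\dots,s_{n1},\dots,s_{nm})^T$. Define $f_{ij}(s)=e^{s_{ij}}/\sum_{l=1}^m e^{s_{il}}$ and $\bar f(s)=f(s)-\frac1m\mathbf 1_{mn}$, where $\mathbf 1_k$ is the all-ones vector in $\mathbb{R}^k$. The matrix $W$ is viewed as an $n\times n$ array of $m\times m$ blocks $W_{i,k}$, and: (S) $W_{i,i}=0$; (A1) $W$ is symmetric; (A2) $W_{i,k}\mathbf 1_m=\lambda_{ik}\mathbf 1_m$ for scalars $\lambda_{ik}$; (A3) $\lambda_{ik}=\lambda_{ki}$. *)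

theory Defs
  imports "HOL-Analysis.Analysis"
begin

text \<open>Index set of R^{mn}: pairs (i,j) with i ranging over a finite type of size n
  (the populations) and j over a finite type of size m (the options).
  The vector s has entries s_{ij} = s $ (i,j).\<close>

definition softmax_f :: "real^('n::finite \<times> 'm::finite) \<Rightarrow> real^('n \<times> 'm)" where
  "softmax_f s = (\<chi> p. exp (s $ p) / (\<Sum>l\<in>UNIV. exp (s $ (fst p, l))))"

definition fbar :: "real^('n::finite \<times> 'm::finite) \<Rightarrow> real^('n \<times> 'm)" where
  "fbar s = softmax_f s - (\<chi> p. 1 / real CARD('m))"

definition mu_max :: "real^'k^'k \<Rightarrow> real" where
  "mu_max W = Max {\<mu>. \<exists>v. v \<noteq> 0 \<and> W *v v = \<mu> *\<^sub>R v}"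

definition is_equilibrium ::
  "real^('n::finite \<times> 'm::finite)^('n \<times> 'm) \<Rightarrow> real \<Rightarrow> real
     \<Rightarrow> real^('n \<times> 'm) \<Rightarrow> real^('n \<times> 'm) \<Rightarrow> bool" where
  "is_equilibrium W ga \<alpha> s a \<longleftrightarrow>
     W *v fbar s - s - a = 0 \<and> ga *\<^sub>R fbar s - \<alpha> *\<^sub>R a = 0"

end

theory Submission
  imports Defs
begin


lemma ln_lower:
  fixes r :: real assumes "r \<ge> 1" shows "2*(r-1)/(r+1) \<le> ln r"
proof -
  let ?f = "\<lambda>x::real. ln x - 2*(x-1)/(x+1)"
  have "?f 1 \<le> ?f r"
  proof (rule DERIV_nonneg_imp_nondecreasing[OF assms])
    fix x :: real assume x: "1 \<le> x" "x \<le> r"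
    have d: "DERIV ?f x :> (1/x - 4/(x+1)^2)"
      using x by (auto intro!: derivative_eq_intros simp: field_simps power2_eq_square)
    have "4*x \<le> (x+1)^2" using sum_squares_ge_zero[of "x-1" 0] by (simp add: power2_eq_square algebra_simps)
    then have "1/x - 4/(x+1)^2 \<ge> 0" using x by (simp add: field_simps)
    then show "\<exists>y. DERIV ?f x :> y \<and> y \<ge> 0" using d by blast
  qed
  then show ?thesis by simp
qed

lemma logmean:
  fixes a b :: real assumes "a > 0" "b > 0"
  shows "2*(a-b)^2/(a+b) \<le> (a-b)*(ln a - ln b)"
proof -
  have key: "2*(x-y)^2/(x+y) \<le> (x-y)*(ln x - ln y)" if "x>0" "y>0" "x \<ge> y" for x y :: real
  proof -
    have r: "x/y \<ge> 1" using that by simp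
    have "2*(x/y-1)/(x/y+1) \<le> ln (x/y)" by (rule ln_lower[OF r])
    also have "ln (x/y) = ln x - ln y" using that by (simp add: ln_div)
    also have "2*(x/y-1)/(x/y+1) = 2*(x-y)/(x+y)"
    proof -
      have e1: "x/y-1 = (x-y)/y" "x/y+1 = (x+y)/y" using that by (simp_all add: field_simps)
      show ?thesis unfolding e1 using that by simp
    qed
    finally have "2*(x-y)/(x+y) \<le> ln x - ln y" .
    from mult_left_mono[OF this, of "x-y"] that
    have "(x-y)*(2*(x-y)/(x+y)) \<le> (x-y)*(ln x - ln y)" by simp
    moreover have "(x-y)*(2*(x-y)/(x+y)) = 2*(x-y)^2/(x+y)" by (simp add: power2_eq_square)
    ultimately show ?thesis by metis
  qed
  show ?thesis
  proof (cases "a \<ge> b")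
    case True then show ?thesis using key assms by blast
  next
    case False
    then have "2*(b-a)^2/(b+a) \<le> (b-a)*(ln b - ln a)" using key assms by simp
    moreover have "(b-a)*(ln b - ln a) = (a-b)*(ln a - ln b)" by (simp add: algebra_simps)
    moreover have "(b-a)^2 = (a-b)^2" by (rule power2_commute)
    ultimately show ?thesis by (simp add: add.commute)
  qed
qed



lemma sum_abs_sq:
  fixes d :: "'a \<Rightarrow> real"
  assumes "finite A" "(\<Sum>j\<in>A. d j) = 0"
  shows "2 * (\<Sum>j\<in>A. (d j)^2) \<le> (\<Sum>j\<in>A. \<bar>d j\<bar>)^2"
proof -
  define S where "S = (\<Sum>j\<in>A. \<bar>d j\<bar>)"
  have b: "\<bar>d j\<bar> \<le> S/2" if j: "j \<in> A" for j
  proof -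
    have "(\<Sum>j\<in>A. \<bar>d j\<bar> + d j) = S" using assms unfolding S_def by (simp add: sum.distrib)
    moreover have "\<bar>d j\<bar> + d j \<le> (\<Sum>j\<in>A. \<bar>d j\<bar> + d j)"
      by (rule member_le_sum[OF j]) (auto simp: assms)
    moreover have "(\<Sum>j\<in>A. \<bar>d j\<bar> - d j) = S" using assms unfolding S_def by (simp add: sum_subtractf)
    moreover have "\<bar>d j\<bar> - d j \<le> (\<Sum>j\<in>A. \<bar>d j\<bar> - d j)"
      by (rule member_le_sum[OF j]) (auto simp: assms)
    ultimately show ?thesis by linarith
  qed
  have "(\<Sum>j\<in>A. (d j)^2) = (\<Sum>j\<in>A. \<bar>d j\<bar> * \<bar>d j\<bar>)"
    by (simp add: power2_eq_square abs_mult_self_eq)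
  also have "\<dots> \<le> (\<Sum>j\<in>A. \<bar>d j\<bar> * (S/2))"
    by (rule sum_mono, rule mult_left_mono) (use b in auto)
  also have "\<dots> = S * S / 2" unfolding sum_distrib_right[symmetric] S_def by simp
  finally show ?thesis by (simp add: S_def power2_eq_square)
qed

lemma cs_weighted:
  fixes d w :: "'a \<Rightarrow> real"
  assumes "\<And>j. j \<in> A \<Longrightarrow> w j > 0"
  shows "(\<Sum>j\<in>A. \<bar>d j\<bar>)^2 \<le> (\<Sum>j\<in>A. (d j)^2 / w j) * (\<Sum>j\<in>A. w j)"
proof -
  have "(\<Sum>j\<in>A. (\<bar>d j\<bar> / sqrt (w j)) * sqrt (w j))^2
        \<le> (\<Sum>j\<in>A. (\<bar>d j\<bar> / sqrt (w j))^2) * (\<Sum>j\<in>A. (sqrt (w j))^2)"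
    by (rule Cauchy_Schwarz_ineq_sum)
  moreover have "(\<Sum>j\<in>A. (\<bar>d j\<bar> / sqrt (w j)) * sqrt (w j)) = (\<Sum>j\<in>A. \<bar>d j\<bar>)"
    by (rule sum.cong) (use assms in force)+
  moreover have "(\<Sum>j\<in>A. (\<bar>d j\<bar> / sqrt (w j))^2) = (\<Sum>j\<in>A. (d j)^2 / w j)"
  proof (rule sum.cong)
    fix j assume "j \<in> A" then have "w j > 0" by (rule assms)
    then show "(\<bar>d j\<bar> / sqrt (w j))^2 = (d j)^2 / w j" by (simp add: power_divide)
  qed simp
  moreover have "(\<Sum>j\<in>A. (sqrt (w j))^2) = (\<Sum>j\<in>A. w j)"
  proof (rule sum.cong)
    fix j assume "j \<in> A" then have "w j > 0" by (rule assms)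
    then show "(sqrt (w j))^2 = w j" by simp
  qed simp
  ultimately show ?thesis by simp
qed



lemma jeff:
  fixes p q :: "'a \<Rightarrow> real"
  assumes fin: "finite A" and pq: "\<And>j. j \<in> A \<Longrightarrow> p j > 0" "\<And>j. j \<in> A \<Longrightarrow> q j > 0"
    and sp: "(\<Sum>j\<in>A. p j) = 1" and sq: "(\<Sum>j\<in>A. q j) = 1"
  shows "2 * (\<Sum>j\<in>A. (p j - q j)^2) \<le> (\<Sum>j\<in>A. (p j - q j) * (ln (p j) - ln (q j)))"
proof -
  let ?X = "(\<Sum>j\<in>A. (p j - q j)^2 / (p j + q j))"
  have s0: "(\<Sum>j\<in>A. p j - q j) = 0" using sp sq by (simp add: sum_subtractf)
  have w2: "(\<Sum>j\<in>A. p j + q j) = 2" using sp sq by (simp add: sum.distrib)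
  have "2 * (\<Sum>j\<in>A. (p j - q j)^2) \<le> (\<Sum>j\<in>A. \<bar>p j - q j\<bar>)^2"
    by (rule sum_abs_sq[OF fin s0])
  also have "\<dots> \<le> ?X * (\<Sum>j\<in>A. p j + q j)"
    by (rule cs_weighted) (use pq in \<open>auto intro: add_pos_pos\<close>)
  also have "\<dots> = (\<Sum>j\<in>A. 2 * (p j - q j)^2 / (p j + q j))"
    unfolding w2 by (simp add: sum_distrib_left mult.commute)
  also have "\<dots> \<le> (\<Sum>j\<in>A. (p j - q j) * (ln (p j) - ln (q j)))"
    by (rule sum_mono, rule logmean) (use pq in auto)
  finally show ?thesis .
qed

lemma sum_pair:
  fixes f :: "('n::finite \<times> 'm::finite) \<Rightarrow> real"
  shows "(\<Sum>p\<in>UNIV. f p) = (\<Sum>i\<in>UNIV. \<Sum>j\<in>UNIV. f (i,j))"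
  by (simp add: sum.cartesian_product UNIV_Times_UNIV[symmetric] del: UNIV_Times_UNIV)

lemma fbar_block:
  fixes s :: "real^('n::finite \<times> 'm::finite)"
  shows "2 * (\<Sum>j\<in>UNIV. (fbar s $ (i,j))^2) \<le> (\<Sum>j\<in>UNIV. fbar s $ (i,j) * s $ (i,j))"
proof -
  define Z where "Z = (\<Sum>l\<in>UNIV. exp (s $ (i, l)))"
  have Zpos: "Z > 0" unfolding Z_def by (rule sum_pos) auto
  define p where "p j = exp (s $ (i,j)) / Z" for j
  define q where "q (j::'m) = 1 / real CARD('m)" for j
  have fb: "fbar s $ (i,j) = p j - q j" for j
    by (simp add: fbar_def softmax_f_def p_def q_def Z_def)
  have pp: "p j > 0" for j using Zpos by (simp add: p_def)
  have qp: "q j > 0" for j by (simp add: q_def)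
  have sp: "(\<Sum>j\<in>UNIV. p j) = 1" using Zpos
    by (simp add: p_def sum_divide_distrib[symmetric] Z_def[symmetric])
  have sq: "(\<Sum>j\<in>UNIV. q j) = 1" by (simp add: q_def)
  have s0: "(\<Sum>j\<in>UNIV. p j - q j) = 0" using sp sq by (simp add: sum_subtractf)
  have lnp: "ln (p j) - ln (q j) = s $ (i,j) + (ln (real CARD('m)) - ln Z)" for j
    using Zpos by (simp add: p_def q_def ln_div)
  have "2 * (\<Sum>j\<in>UNIV. (p j - q j)^2) \<le> (\<Sum>j\<in>UNIV. (p j - q j) * (ln (p j) - ln (q j)))"
    by (rule jeff) (use pp qp sp sq in auto)
  also have "\<dots> = (\<Sum>j\<in>UNIV. (p j - q j) * s $ (i,j)) + (\<Sum>j\<in>UNIV. p j - q j) * (ln (real CARD('m)) - ln Z)"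
    unfolding lnp by (simp add: distrib_left sum.distrib sum_distrib_right)
  also have "\<dots> = (\<Sum>j\<in>UNIV. (p j - q j) * s $ (i,j))" using s0 by simp
  finally show ?thesis by (simp add: fb)
qed

lemma fbar_inner:
  fixes s :: "real^('n::finite \<times> 'm::finite)"
  shows "2 * (fbar s \<bullet> fbar s) \<le> fbar s \<bullet> s"
proof -
  have "2 * (fbar s \<bullet> fbar s) = (\<Sum>i\<in>UNIV. 2 * (\<Sum>j\<in>UNIV. (fbar s $ (i,j))^2))"
    by (simp add: inner_vec_def sum_pair[of "\<lambda>p. fbar s $ p * fbar s $ p"] sum_distrib_left power2_eq_square)
  also have "\<dots> \<le> (\<Sum>i\<in>UNIV. (\<Sum>j\<in>UNIV. fbar s $ (i,j) * s $ (i,j)))"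
    by (rule sum_mono, rule fbar_block)
  also have "\<dots> = fbar s \<bullet> s"
    by (simp add: inner_vec_def sum_pair[of "\<lambda>p. fbar s $ p * s $ p"])
  finally show ?thesis .
qed



lemma sym_inner:
  fixes W :: "real^'k^'k"
  assumes "transpose W = W"
  shows "u \<bullet> (W *v v) = (W *v u) \<bullet> v"
proof -
  have "u \<bullet> (W *v v) = (u v* W) \<bullet> v" by (simp add: dot_lmul_matrix)
  also have "u v* W = transpose W *v u" by simp
  finally show ?thesis using assms by simp
qed

lemma eig_finite:
  fixes W :: "real^'k^'k"
  assumes sym: "transpose W = W"
  shows "finite {\<mu>. \<exists>v. v \<noteq> 0 \<and> W *v v = \<mu> *\<^sub>R v}"
proof -
  define E where "E = {\<mu>. \<exists>v. v \<noteq> 0 \<and> W *v v = \<mu> *\<^sub>R v}"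
  define ev where "ev \<mu> = (SOME v. v \<noteq> 0 \<and> W *v v = \<mu> *\<^sub>R v)" for \<mu>
  have ev: "ev \<mu> \<noteq> 0 \<and> W *v ev \<mu> = \<mu> *\<^sub>R ev \<mu>" if "\<mu> \<in> E" for \<mu>
  proof -
    from that obtain v where "v \<noteq> 0 \<and> W *v v = \<mu> *\<^sub>R v" unfolding E_def by auto
    then show ?thesis unfolding ev_def by (rule someI)
  qed
  have orth: "ev a \<bullet> ev b = 0" if "a \<in> E" "b \<in> E" "a \<noteq> b" for a b
  proof -
    have "a * (ev a \<bullet> ev b) = (W *v ev a) \<bullet> ev b" using ev[OF that(1)] by simp
    also have "\<dots> = ev a \<bullet> (W *v ev b)" using sym_inner[OF sym] by simp
    also have "\<dots> = b * (ev a \<bullet> ev b)" using ev[OF that(2)] by simp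
    finally show ?thesis using that(3) by simp
  qed
  have inj: "inj_on ev E"
  proof (rule inj_onI)
    fix a b assume ab: "a \<in> E" "b \<in> E" "ev a = ev b"
    show "a = b" using orth[OF ab(1,2)] ab ev[OF ab(1)] by auto
  qed
  have "pairwise orthogonal (ev ` E)"
    unfolding pairwise_def orthogonal_def using orth by auto
  moreover have "0 \<notin> ev ` E" using ev by auto
  ultimately have "independent (ev ` E)" by (rule pairwise_orthogonal_independent)
  then have "finite (ev ` E)" using independent_bound by blast
  then have "finite E" using finite_imageD inj by blast
  then show ?thesis unfolding E_def .
qed

lemma rayleigh:
  fixes W :: "real^'k^'k"
  assumes sym: "transpose W = W"
  shows "x \<bullet> (W *v x) \<le> mu_max W * (x \<bullet> x)"
proof -
  let ?Q = "\<lambda>v. v \<bullet> (W *v v)"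
  have cont: "continuous_on (sphere 0 1) ?Q"
    by (intro continuous_intros linear_continuous_on matrix_vector_mul_linear)
  obtain x0 where x0: "x0 \<in> sphere 0 1" and mx: "\<And>y. y \<in> sphere 0 1 \<Longrightarrow> ?Q y \<le> ?Q x0"
    using continuous_attains_sup[OF compact_sphere _ cont] by auto
  define M where "M = ?Q x0"
  have x0n: "x0 \<bullet> x0 = 1" using x0 by (simp add: dot_square_norm)
  have bound: "?Q v \<le> M * (v \<bullet> v)" for v
  proof (cases "v = 0")
    case True then show ?thesis by simp
  next
    case False
    define y where "y = (1 / norm v) *\<^sub>R v"
    have "y \<in> sphere 0 1" using False by (simp add: y_def)
    then have "?Q y \<le> M" using mx M_def by simp
    moreover have "?Q y = ?Q v / (v \<bullet> v)"
      using False by (simp add: y_def matrix_vector_mult_scaleR dot_square_norm power2_eq_square)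
    moreover have "v \<bullet> v > 0" using False by simp
    ultimately show ?thesis by (simp add: divide_le_eq mult.commute)
  qed
  define y where "y = W *v x0 - M *\<^sub>R x0"
  have "y = 0"
  proof -
    have "(W *v x0) \<bullet> x0 = x0 \<bullet> (W *v x0)" by (rule inner_commute)
    then have yx0: "y \<bullet> x0 = 0" using x0n by (simp add: y_def inner_diff_left M_def)
    define c where "c = y \<bullet> y"
    define d where "d = M * (y \<bullet> y) - ?Q y"
    have d0: "d \<ge> 0" using bound[of y] by (simp add: d_def)
    have "?Q (x0 + t *\<^sub>R y) \<le> M * ((x0 + t *\<^sub>R y) \<bullet> (x0 + t *\<^sub>R y))" for t by (rule bound)
    moreover have "?Q (x0 + t *\<^sub>R y) = M + 2 * t * c + t^2 * ?Q y" for t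
    proof -
      have Wx0: "W *v x0 = y + M *\<^sub>R x0" by (simp add: y_def)
      have a1: "x0 \<bullet> (W *v y) = c"
        using sym_inner[OF sym, of x0 y] Wx0 yx0 inner_commute[of y x0] by (simp add: inner_add_left c_def)
      have a2: "y \<bullet> (W *v x0) = c" using Wx0 yx0 inner_commute[of y x0] by (simp add: inner_add_right c_def)
      have "?Q (x0 + t *\<^sub>R y) = x0 \<bullet> (W *v x0) + t * (x0 \<bullet> (W *v y)) + t * (y \<bullet> (W *v x0)) + t * t * (y \<bullet> (W *v y))"
        by (simp add: matrix_vector_right_distrib matrix_vector_mult_scaleR inner_add_left inner_add_right distrib_left)
      also have "\<dots> = M + 2 * t * c + t^2 * ?Q y" unfolding a1 a2 M_def by (simp add: power2_eq_square)
      finally show ?thesis .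
    qed
    moreover have "(x0 + t *\<^sub>R y) \<bullet> (x0 + t *\<^sub>R y) = 1 + t^2 * c" for t
      using x0n yx0 inner_commute[of y x0] by (simp add: inner_add_left inner_add_right c_def power2_eq_square)
    ultimately have ineq0: "M + 2 * t * c + t^2 * ?Q y \<le> M * (1 + t^2 * c)" for t
      by metis
    have ineq: "2 * t * c \<le> t^2 * d" for t
    proof -
      have "t^2 * d = M * (1 + t^2 * c) - M - t^2 * ?Q y" by (simp add: d_def c_def algebra_simps)
      then show ?thesis using ineq0[of t] by linarith
    qed
    define e where "e = d + 1"
    have e0: "e > 0" using d0 by (simp add: e_def)
    have "2 * (c/e) * c * e^2 \<le> (c/e)^2 * d * e^2"
      by (rule mult_right_mono[OF ineq]) simp
    moreover have "2 * (c/e) * c * e^2 = 2 * (c*c) * e" using e0 by (simp add: power2_eq_square)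
    moreover have "(c/e)^2 * d * e^2 = (c*c) * d" using e0 by (simp add: power2_eq_square)
    ultimately have "2 * (c*c) * e \<le> (c*c) * d" by simp
    then have "(c*c) * (d + 2) \<le> 0" by (simp add: e_def algebra_simps)
    moreover have "c * c \<ge> 0" by simp
    ultimately have "c * c = 0" using d0
      by (metis add_nonneg_pos antisym mult_le_0_iff not_le zero_less_numeral less_le)
    then have "c = 0" by simp
    then show ?thesis by (simp add: c_def)
  qed
  then have "W *v x0 = M *\<^sub>R x0" by (simp add: y_def)
  moreover have "x0 \<noteq> 0" using x0n by auto
  ultimately have "M \<in> {\<mu>. \<exists>v. v \<noteq> 0 \<and> W *v v = \<mu> *\<^sub>R v}" by blast
  then have "M \<le> mu_max W" unfolding mu_max_def using eig_finite[OF sym] by (rule Max_ge[rotated])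
  moreover have "x \<bullet> x \<ge> 0" by simp
  ultimately show ?thesis using bound[of x] by (meson mult_right_mono order_trans)
qed


theorem proposition1:
  fixes W :: "real^('n::finite \<times> 'm::finite)^('n \<times> 'm)"
    and \<alpha> ga :: real
  assumes m2: "CARD('m) \<ge> 2"
    and alpha: "0 < \<alpha>" "\<alpha> < 1"
    and ga_pos: "ga > 0"
    and S: "\<forall>i j l. W $ (i, j) $ (i, l) = 0"
    and A1: "transpose W = W"
    and A23: "\<exists>lam :: 'n \<Rightarrow> 'n \<Rightarrow> real.
               (\<forall>i k j. (\<Sum>l\<in>UNIV. W $ (i, j) $ (k, l)) = lam i k) \<and>
               (\<forall>i k. lam i k = lam k i)"
    and gain: "ga > \<alpha> * (mu_max W - 2)"
  shows "is_equilibrium W ga \<alpha> 0 0 \<and>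
         (\<forall>s a. is_equilibrium W ga \<alpha> s a \<longrightarrow> s = 0 \<and> a = 0)"
proof
  have f0: "fbar (0 :: real^('n \<times> 'm)) = 0"
    by (simp add: fbar_def softmax_f_def vec_eq_iff)
  show "is_equilibrium W ga \<alpha> 0 0" by (simp add: is_equilibrium_def f0)
next
  show "\<forall>s a. is_equilibrium W ga \<alpha> s a \<longrightarrow> s = 0 \<and> a = 0"
  proof (intro allI impI)
    fix s a :: "real^('n \<times> 'm)"
    assume eq: "is_equilibrium W ga \<alpha> s a"
    define x where "x = fbar s"
    define \<beta> where "\<beta> = ga / \<alpha>"
    have e1: "W *v x - s - a = 0" and e2: "ga *\<^sub>R x - \<alpha> *\<^sub>R a = 0"
      using eq by (simp_all add: is_equilibrium_def x_def)
    have aeq: "a = \<beta> *\<^sub>R x"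
    proof -
      have "\<alpha> *\<^sub>R a = ga *\<^sub>R x" using e2 by simp
      then have "(1/\<alpha>) *\<^sub>R (\<alpha> *\<^sub>R a) = (1/\<alpha>) *\<^sub>R (ga *\<^sub>R x)" by simp
      then show ?thesis using alpha by (simp add: \<beta>_def)
    qed
    have seq: "s = W *v x - \<beta> *\<^sub>R x" using e1 aeq by (simp add: algebra_simps)
    have "2 * (x \<bullet> x) \<le> x \<bullet> s" unfolding x_def by (rule fbar_inner)
    also have "x \<bullet> s = x \<bullet> (W *v x) - \<beta> * (x \<bullet> x)" by (simp add: seq inner_diff_right)
    also have "x \<bullet> (W *v x) \<le> mu_max W * (x \<bullet> x)" by (rule rayleigh[OF A1])
    finally have ineq: "(2 + \<beta>) * (x \<bullet> x) \<le> mu_max W * (x \<bullet> x)" by (simp add: algebra_simps)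
    have bg: "\<beta> > mu_max W - 2" using gain alpha by (simp add: \<beta>_def pos_less_divide_eq mult.commute)
    have "x \<bullet> x = 0"
    proof (rule ccontr)
      assume "x \<bullet> x \<noteq> 0"
      then have "x \<bullet> x > 0" by (simp add: order_le_less)
      then have "mu_max W * (x \<bullet> x) < (2 + \<beta>) * (x \<bullet> x)" using bg by (intro mult_strict_right_mono) auto
      then show False using ineq by linarith
    qed
    then have x0: "x = 0" by simp
    show "s = 0 \<and> a = 0" using seq aeq x0 by simp
  qed
qed

end
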